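(* Let $(N,+,* )$ be a planar nearring with $D(N)\ne\{0\}$. Then the set $K$ of zero multipliers of $N$ is an ideal of $N$.
   Context: A (right) nearring $(N,+,* )$ is a set with a group $(N,+)$, a semigroup $(N,* )$, and right distributivity $(a+b)*c=a*c+b*c$. $N$ is planar if the relation $a\cong b$ ($x*a=x*b$ for all $x$) has at least $3$ classes and for all $a,b,c$ with $a\not\cong b$ the equation $x*a=x*b+c$ has a unique solution. The zero multipliers are the $n\in N$ with $x*n=0$ for all $x\in N$. $D(N)=\{n: n*(a+b)=n*a+n*b\ \forall a,b\}$. A subset $I$ is an ideal if it is a normal subgroup of $(N,+)$ with $i*n\in I$ for all $i\in I,n\in N$ (right ideal), and $n*m-n*(m+i)\in I$ for all $n,m\in N$, $i\in I$ (left ideal). *)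

theory Defs
  imports Main
begin

definition nearring :: "('a::group_add \<Rightarrow> 'a \<Rightarrow> 'a) \<Rightarrow> bool" where
  "nearring mult \<longleftrightarrow>
     (\<forall>a b c. mult (mult a b) c = mult a (mult b c)) \<and>
     (\<forall>a b c. mult (a + b) c = mult a c + mult b c)"

definition mult_equiv :: "('a \<Rightarrow> 'a \<Rightarrow> 'a) \<Rightarrow> 'a \<Rightarrow> 'a \<Rightarrow> bool" where
  "mult_equiv mult a b \<longleftrightarrow> (\<forall>x. mult x a = mult x b)"

definition planar :: "('a::group_add \<Rightarrow> 'a \<Rightarrow> 'a) \<Rightarrow> bool" where
  "planar mult \<longleftrightarrow>
     (\<exists>a b c. \<not> mult_equiv mult a b \<and> \<not> mult_equiv mult a c \<and> \<not> mult_equiv mult b c) \<and>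
     (\<forall>a b c. \<not> mult_equiv mult a b \<longrightarrow> (\<exists>!x. mult x a = mult x b + c))"

definition zero_multipliers :: "('a::group_add \<Rightarrow> 'a \<Rightarrow> 'a) \<Rightarrow> 'a set" where
  "zero_multipliers mult = {n. \<forall>x. mult x n = 0}"

definition distrib_elems :: "('a::group_add \<Rightarrow> 'a \<Rightarrow> 'a) \<Rightarrow> 'a set" where
  "distrib_elems mult = {n. \<forall>a b. mult n (a + b) = mult n a + mult n b}"

definition normal_subgroup :: "'a::group_add set \<Rightarrow> bool" where
  "normal_subgroup I \<longleftrightarrow>
     0 \<in> I \<and> (\<forall>x\<in>I. \<forall>y\<in>I. x + y \<in> I) \<and> (\<forall>x\<in>I. - x \<in> I) \<and>
     (\<forall>n. \<forall>x\<in>I. n + x - n \<in> I)"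

definition nr_ideal :: "('a::group_add \<Rightarrow> 'a \<Rightarrow> 'a) \<Rightarrow> 'a set \<Rightarrow> bool" where
  "nr_ideal mult I \<longleftrightarrow>
     normal_subgroup I \<and>
     (\<forall>i\<in>I. \<forall>n. mult i n \<in> I) \<and>
     (\<forall>n m. \<forall>i\<in>I. mult n m - mult n (m + i) \<in> I)"

end

theory Submission
  imports Defs
begin

theorem mainTheorem5:
  fixes mult :: "'a::group_add \<Rightarrow> 'a \<Rightarrow> 'a"
  assumes "nearring mult"
    and "planar mult"
    and "distrib_elems mult \<noteq> {0}"
  shows "nr_ideal mult (zero_multipliers mult)"
proof -
  have assoc: "\<And>a b c. mult (mult a b) c = mult a (mult b c)"
    and rd: "\<And>a b c. mult (a + b) c = mult a c + mult b c"
    using assms(1) unfolding nearring_def by auto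
  have z0: "\<And>c. mult 0 c = 0"
  proof -
    fix c
    have "mult (0+0) c = mult 0 c + mult 0 c" by (rule rd)
    then show "mult 0 c = 0" by (metis add.right_neutral add_left_cancel)
  qed
  have uniq: "\<And>a b c. \<not> mult_equiv mult a b \<Longrightarrow> \<exists>!x. mult x a = mult x b + c"
    using assms(2) unfolding planar_def by blast
  obtain a0 b0 where ab: "\<not> mult_equiv mult a0 b0"
    using assms(2) unfolding planar_def by blast
  have zs: "\<And>y. mult y 0 = 0"
  proof -
    fix y
    define n where "n = mult y 0"
    have nc: "\<And>z. mult n z = n" unfolding n_def using assoc z0 by simp
    have "\<exists>!x. mult x a0 = mult x b0 + 0" using uniq[OF ab] .
    moreover have "mult 0 a0 = mult 0 b0 + 0" using z0 by simp
    moreover have "mult n a0 = mult n b0 + 0" using nc by simp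
    ultimately have "n = 0" by blast
    then show "mult y 0 = 0" unfolding n_def .
  qed
  have notA: "\<And>y. y \<notin> zero_multipliers mult \<Longrightarrow> \<not> mult_equiv mult y 0"
    unfolding zero_multipliers_def mult_equiv_def using zs by auto
  have inj: "\<And>y x. y \<notin> zero_multipliers mult \<Longrightarrow> mult x y = 0 \<Longrightarrow> x = 0"
  proof -
    fix y x assume y: "y \<notin> zero_multipliers mult" and x: "mult x y = 0"
    have "\<exists>!x. mult x y = mult x 0 + 0" using uniq[OF notA[OF y]] .
    moreover have "mult 0 y = mult 0 0 + 0" using z0 by simp
    moreover have "mult x y = mult x 0 + 0" using x zs by simp
    ultimately show "x = 0" by blast
  qed
  have surj: "\<And>y c. y \<notin> zero_multipliers mult \<Longrightarrow> \<exists>x. mult x y = c"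
  proof -
    fix y c assume y: "y \<notin> zero_multipliers mult"
    have "\<exists>!x. mult x y = mult x 0 + c" using uniq[OF notA[OF y]] .
    then show "\<exists>x. mult x y = c" using zs by auto
  qed
  have rideal: "\<forall>i\<in>zero_multipliers mult. \<forall>n. mult i n \<in> zero_multipliers mult"
    unfolding zero_multipliers_def by (simp add: assoc[symmetric] z0)
  have D0: "0 \<in> distrib_elems mult" using z0 unfolding distrib_elems_def by simp
  obtain d where dD: "d \<in> distrib_elems mult" and d0: "d \<noteq> 0"
    using assms(3) D0 by blast
  have dd: "\<And>a b. mult d (a + b) = mult d a + mult d b"
    using dD unfolding distrib_elems_def by auto
    have Aeq: "\<And>y. y \<in> zero_multipliers mult \<longleftrightarrow> mult d y = 0"
    proof -
      fix y
      show "y \<in> zero_multipliers mult \<longleftrightarrow> mult d y = 0"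
        using inj[of y d] d0 unfolding zero_multipliers_def by auto
    qed
    have negd: "\<And>a. mult d (- a) = - mult d a"
    proof -
      fix a
      have "mult d (- a + a) = mult d (-a) + mult d a" by (rule dd)
      then have "0 = mult d (-a) + mult d a" using zs by simp
      then show "mult d (- a) = - mult d a" by (metis add_eq_0_iff2 add.commute neg_eq_iff_add_eq_0)
    qed
    have ns: "normal_subgroup (zero_multipliers mult)"
      unfolding normal_subgroup_def
    proof (intro conjI ballI allI)
      show "0 \<in> zero_multipliers mult" unfolding Aeq by (rule zs)
    next
      fix x y assume "x \<in> zero_multipliers mult" "y \<in> zero_multipliers mult"
      then have "mult d x = 0" "mult d y = 0" using Aeq by auto
      then show "x + y \<in> zero_multipliers mult" unfolding Aeq by (simp only: dd add_0)
    next
      fix x assume "x \<in> zero_multipliers mult"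
      then have "mult d x = 0" using Aeq by auto
      then show "- x \<in> zero_multipliers mult" unfolding Aeq by (simp only: negd neg_0_equal_iff_equal minus_zero)
    next
      fix n x assume "x \<in> zero_multipliers mult"
      then have x0: "mult d x = 0" using Aeq by auto
      have "mult d (n + x - n) = mult d n + mult d x + - mult d n"
        by (simp only: diff_conv_add_uminus dd negd)
      then show "n + x - n \<in> zero_multipliers mult" unfolding Aeq using x0 by simp
    qed
    have eqv: "\<And>m i x. i \<in> zero_multipliers mult \<Longrightarrow> mult x (m + i) = mult x m"
    proof -
      fix m i x assume i: "i \<in> zero_multipliers mult"
      have "mult_equiv mult (m + i) m"
      proof (rule ccontr)
        assume ne: "\<not> mult_equiv mult (m + i) m"
        have "\<exists>!x. mult x (m + i) = mult x m + 0" using uniq[OF ne] .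
        moreover have "mult 0 (m + i) = mult 0 m + 0" using z0 by simp
        moreover have "mult d (m + i) = mult d m + 0" using dd i Aeq by simp
        ultimately show False using d0 by blast
      qed
      then show "mult x (m + i) = mult x m" unfolding mult_equiv_def by simp
    qed
    have lid: "\<forall>n m. \<forall>i\<in>zero_multipliers mult. mult n m - mult n (m + i) \<in> zero_multipliers mult"
      using eqv zs unfolding zero_multipliers_def by simp
    show ?thesis unfolding nr_ideal_def using ns rideal lid by blast
qed

end
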